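(* Let $\Omega\subset\mathbb{R}^N$ be an open domain, let $g:\mathbb{R}^N\setminus\Omega\to\mathbb{R}$ be bounded, and let $\mathcal{A}:\Omega\times\mathcal{X}\times\mathbb{R}\to\mathbb{R}$ satisfy assumptions (a), (b), (c) below. Consider the DPP with boundary values $$\mathcal{A}(x,u,u(x))=0 \ (x\in\Omega),\qquad u(x)=g(x)\ (x\in\mathbb{R}^N\setminus\Omega). \tag{DPP}$$ Assume that either (H1) there exists at least one viscosity subsolution of (DPP), and (H2) all viscosity subsolutions of (DPP) are uniformly bounded from above (i.e. there is $M\in\mathbb{R}$ with $v\le M$ on $\mathbb{R}^N$ for every viscosity subsolution $v$); or (H1* ) there exists at least one viscosity supersolution of (DPP), and (H2* ) all viscosity supersolutions of (DPP) are uniformly bounded from below. Then there exists at least one viscosity solution of (DPP).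
   Context: $\overline{\mathcal{X}}$ denotes the set of bounded functions $f:\mathbb{R}^N\to\mathbb{R}$, and $\mathcal{X}\subset\overline{\mathcal{X}}$ is a fixed subset. Assumptions on $\mathcal{A}$: (a) $\mathcal{A}$ is nonincreasing in the second variable: for all $(x,s)$ and all $\varphi_1,\varphi_2\in\mathcal{X}$ with $\varphi_1\le\varphi_2$ on $\mathbb{R}^N$, $\mathcal{A}(x,\varphi_2,s)\le\mathcal{A}(x,\varphi_1,s)$; (b) $\mathcal{A}$ is nondecreasing in the third variable: for all $(x,\varphi)$ and $s_1\le s_2$, $\mathcal{A}(x,\varphi,s_1)\le\mathcal{A}(x,\varphi,s_2)$; (c) for every $(x,\varphi)$ the map $s\mapsto\mathcal{A}(x,\varphi,s)$ has exactly one zero. Viscosity solutions of (DPP): $u\in\overline{\mathcal{X}}$ is a viscosity supersolution if $u(x)\ge g(x)$ for all $x\in\mathbb{R}^N\setminus\Omega$ and, for every $x\in\Omega$, $\mathcal{A}(x,\varphi,u(x))\ge0$ for all $\varphi\in\mathcal{X}$ with $\varphi\le u$ on $\mathbb{R}^N$. $u\in\overline{\mathcal{X}}$ is a viscosity subsolution if $u(x)\le g(x)$ for all $x\in\mathbb{R}^N\setminus\Omega$ and, for every $x\in\Omega$, $\mathcal{A}(x,\varphi,u(x))\le0$ for all $\varphi\in\mathcal{X}$ with $\varphi\ge u$ on $\mathbb{R}^N$. A viscosity solution is a function $u\in\overline{\mathcal{X}}$ that is both a viscosity subsolution and a viscosity supersolution. *)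

theory Defs
  imports "HOL-Analysis.Analysis"
begin

text \<open>The space R^N is rendered as an arbitrary Euclidean space 'a.
  Xbar = bounded real functions on R^N.\<close>

definition Xbar :: "('a::euclidean_space \<Rightarrow> real) set" where
  "Xbar = {f. bounded (range f)}"

definition visc_super ::
  "'a::euclidean_space set \<Rightarrow> ('a \<Rightarrow> real) \<Rightarrow> ('a \<Rightarrow> real) set
   \<Rightarrow> ('a \<Rightarrow> ('a \<Rightarrow> real) \<Rightarrow> real \<Rightarrow> real) \<Rightarrow> ('a \<Rightarrow> real) \<Rightarrow> bool" where
  "visc_super \<Omega> g X A u \<longleftrightarrow>
     u \<in> Xbar \<and>
     (\<forall>x \<in> - \<Omega>. u x \<ge> g x) \<and>
     (\<forall>x \<in> \<Omega>. \<forall>\<phi> \<in> X. (\<forall>y. \<phi> y \<le> u y) \<longrightarrow> A x \<phi> (u x) \<ge> 0)"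

definition visc_sub ::
  "'a::euclidean_space set \<Rightarrow> ('a \<Rightarrow> real) \<Rightarrow> ('a \<Rightarrow> real) set
   \<Rightarrow> ('a \<Rightarrow> ('a \<Rightarrow> real) \<Rightarrow> real \<Rightarrow> real) \<Rightarrow> ('a \<Rightarrow> real) \<Rightarrow> bool" where
  "visc_sub \<Omega> g X A u \<longleftrightarrow>
     u \<in> Xbar \<and>
     (\<forall>x \<in> - \<Omega>. u x \<le> g x) \<and>
     (\<forall>x \<in> \<Omega>. \<forall>\<phi> \<in> X. (\<forall>y. \<phi> y \<ge> u y) \<longrightarrow> A x \<phi> (u x) \<le> 0)"

definition visc_sol ::
  "'a::euclidean_space set \<Rightarrow> ('a \<Rightarrow> real) \<Rightarrow> ('a \<Rightarrow> real) set
   \<Rightarrow> ('a \<Rightarrow> ('a \<Rightarrow> real) \<Rightarrow> real \<Rightarrow> real) \<Rightarrow> ('a \<Rightarrow> real) \<Rightarrow> bool" where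
  "visc_sol \<Omega> g X A u \<longleftrightarrow> visc_sub \<Omega> g X A u \<and> visc_super \<Omega> g X A u"

end

theory Submission
  imports Defs
begin

lemma Xbar_boundI: "(\<And>y. \<bar>f y\<bar> \<le> B) \<Longrightarrow> f \<in> Xbar"
  unfolding Xbar_def bounded_real by auto

lemma Xbar_boundE: "f \<in> Xbar \<Longrightarrow> \<exists>B. \<forall>y. \<bar>f y\<bar> \<le> B"
  unfolding Xbar_def bounded_real by auto

lemma perron_sub:
  fixes \<Omega> :: "'a::euclidean_space set"
    and g :: "'a \<Rightarrow> real"
    and X :: "('a \<Rightarrow> real) set"
    and A :: "'a \<Rightarrow> ('a \<Rightarrow> real) \<Rightarrow> real \<Rightarrow> real"
  assumes g_bdd: "bounded (g ` (- \<Omega>))"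
    and A_a: "\<And>x \<phi>1 \<phi>2 s. x \<in> \<Omega> \<Longrightarrow> \<phi>1 \<in> X \<Longrightarrow> \<phi>2 \<in> X \<Longrightarrow>
                 (\<forall>y. \<phi>1 y \<le> \<phi>2 y) \<Longrightarrow> A x \<phi>2 s \<le> A x \<phi>1 s"
    and A_b: "\<And>x \<phi> s1 s2. x \<in> \<Omega> \<Longrightarrow> \<phi> \<in> X \<Longrightarrow> s1 \<le> s2 \<Longrightarrow>
                 A x \<phi> s1 \<le> A x \<phi> s2"
    and A_c: "\<And>x \<phi>. x \<in> \<Omega> \<Longrightarrow> \<phi> \<in> X \<Longrightarrow> \<exists>!s. A x \<phi> s = 0"
    and ex: "visc_sub \<Omega> g X A v0"
    and M: "\<And>v y. visc_sub \<Omega> g X A v \<Longrightarrow> v y \<le> M"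
  shows "\<exists>u. visc_sol \<Omega> g X A u"
proof -
  define S where "S = {v. visc_sub \<Omega> g X A v}"
  define u where "u y = Sup ((\<lambda>v. v y) ` S)" for y
  have S0: "v0 \<in> S" using ex unfolding S_def by auto
  have bdd: "bdd_above ((\<lambda>v. v y) ` S)" for y
    using M unfolding S_def by (auto intro!: bdd_aboveI)
  have upper: "v y \<le> u y" if "v \<in> S" for v y
    unfolding u_def by (rule cSup_upper) (use that bdd in auto)
  have uM: "u y \<le> M" for y
    unfolding u_def by (rule cSup_least) (use S0 M S_def in auto)
  obtain B0 where B0: "\<And>y. \<bar>v0 y\<bar> \<le> B0" using Xbar_boundE ex visc_sub_def by metis
  have uX: "u \<in> Xbar"
  proof (rule Xbar_boundI)
    fix y
    have "v0 y \<le> u y" using upper S0 by auto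
    then show "\<bar>u y\<bar> \<le> max B0 \<bar>M\<bar>" using B0[of y] uM[of y] by auto
  qed
  obtain Bg where Bg: "\<And>y. y \<in> - \<Omega> \<Longrightarrow> \<bar>g y\<bar> \<le> Bg"
    using g_bdd unfolding bounded_real by auto
  have zero_bound: "s \<le> s0" if "x \<in> \<Omega>" "\<phi> \<in> X" "A x \<phi> s \<le> 0" "A x \<phi> s0 = 0" for x \<phi> s s0
  proof (rule ccontr)
    assume "\<not> s \<le> s0"
    then have "A x \<phi> s0 \<le> A x \<phi> s" using A_b[OF that(1,2), of s0 s] by linarith
    then have "A x \<phi> s = 0" using that(3,4) by linarith
    then have "s = s0" using A_c[OF that(1,2)] that(4) by auto
    then show False using \<open>\<not> s \<le> s0\<close> by auto
  qed
  have usub: "visc_sub \<Omega> g X A u"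
    unfolding visc_sub_def
  proof (intro conjI ballI impI allI)
    show "u \<in> Xbar" by (rule uX)
  next
    fix x assume "x \<in> - \<Omega>"
    then show "u x \<le> g x" unfolding u_def
      by (intro cSup_least) (use S0 in \<open>blast\<close>, auto simp: S_def visc_sub_def)
  next
    fix x \<phi> assume x: "x \<in> \<Omega>" and \<phi>: "\<phi> \<in> X" and ge: "\<forall>y. u y \<le> \<phi> y"
    obtain s0 where s0: "A x \<phi> s0 = 0" using A_c[OF x \<phi>] by auto
    have "v x \<le> s0" if "v \<in> S" for v
    proof -
      have "\<forall>y. v y \<le> \<phi> y" using upper[OF that] ge order_trans by blast
      then have "A x \<phi> (v x) \<le> 0" using that x \<phi> unfolding S_def visc_sub_def by blast
      then show ?thesis using zero_bound x \<phi> s0 by auto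
    qed
    then have "u x \<le> s0" unfolding u_def by (intro cSup_least) (use S0 in auto)
    then have "A x \<phi> (u x) \<le> A x \<phi> s0" using A_b x \<phi> by auto
    then show "A x \<phi> (u x) \<le> 0" using s0 by auto
  qed
  have "visc_super \<Omega> g X A u"
    unfolding visc_super_def
  proof (intro conjI ballI impI allI)
    show "u \<in> Xbar" by (rule uX)
  next
    fix x assume x: "x \<in> - \<Omega>"
    define w where "w y = (if y \<in> \<Omega> then u y else g y)" for y
    have "w \<in> Xbar"
    proof (rule Xbar_boundI)
      fix y show "\<bar>w y\<bar> \<le> max Bg (max B0 \<bar>M\<bar>)"
        using Bg[of y] B0[of y] uM[of y] upper[OF S0, of y] unfolding w_def by auto
    qed
    moreover have "\<forall>y. u y \<le> w y"
      using usub unfolding w_def visc_sub_def by auto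
    ultimately have "visc_sub \<Omega> g X A w"
      unfolding visc_sub_def
    proof (intro conjI ballI impI allI)
      fix y assume "y \<in> - \<Omega>" then show "w y \<le> g y" unfolding w_def by auto
    next
      fix y \<psi> assume y: "y \<in> \<Omega>" and \<psi>: "\<psi> \<in> X" and ge: "\<forall>z. w z \<le> \<psi> z"
      have "\<forall>z. u z \<le> \<psi> z" using ge \<open>\<forall>y. u y \<le> w y\<close> order_trans by blast
      then have "A y \<psi> (u y) \<le> 0" using usub y \<psi> unfolding visc_sub_def by blast
      then show "A y \<psi> (w y) \<le> 0" using y unfolding w_def by simp
    qed
    then have "w x \<le> u x" using upper unfolding S_def by auto
    then show "g x \<le> u x" using x w_def by auto
  next
    fix x \<phi> assume x: "x \<in> \<Omega>" and \<phi>: "\<phi> \<in> X" and le: "\<forall>y. \<phi> y \<le> u y"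
    show "0 \<le> A x \<phi> (u x)"
    proof (rule ccontr)
      assume neg: "\<not> 0 \<le> A x \<phi> (u x)"
      obtain s0 where s0: "A x \<phi> s0 = 0" using A_c[OF x \<phi>] by auto
      have gt: "u x < s0"
      proof (rule ccontr)
        assume "\<not> u x < s0"
        then have "A x \<phi> s0 \<le> A x \<phi> (u x)" using A_b x \<phi> by auto
        then show False using neg s0 by auto
      qed
      define w where "w = u(x := s0)"
      have wX: "w \<in> Xbar"
      proof (rule Xbar_boundI)
        fix y show "\<bar>w y\<bar> \<le> max \<bar>s0\<bar> (max B0 \<bar>M\<bar>)"
          using B0[of y] uM[of y] upper[OF S0, of y] unfolding w_def by auto
      qed
      have uw: "\<forall>y. u y \<le> w y" using gt unfolding w_def by auto
      have "visc_sub \<Omega> g X A w"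
        unfolding visc_sub_def
      proof (intro conjI ballI impI allI)
        show "w \<in> Xbar" by (rule wX)
      next
        fix y assume "y \<in> - \<Omega>"
        then show "w y \<le> g y" using x usub unfolding w_def visc_sub_def by auto
      next
        fix y \<psi> assume y: "y \<in> \<Omega>" and \<psi>: "\<psi> \<in> X" and ge: "\<forall>z. w z \<le> \<psi> z"
        have ge': "\<forall>z. u z \<le> \<psi> z" using ge uw order_trans by blast
        show "A y \<psi> (w y) \<le> 0"
        proof (cases "y = x")
          case True
          have "\<forall>z. \<phi> z \<le> \<psi> z" using le ge' order_trans by blast
          then have "A x \<psi> s0 \<le> A x \<phi> s0" using A_a x \<phi> \<psi> by auto
          then show ?thesis using True s0 w_def by auto
        next
          case False
          then show ?thesis using usub y \<psi> ge' unfolding visc_sub_def w_def by auto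
        qed
      qed
      then have "w x \<le> u x" using upper unfolding S_def by auto
      then show False using gt w_def by auto
    qed
  qed
  then show ?thesis using usub unfolding visc_sol_def by auto
qed

lemma Xbar_neg: "(\<lambda>y. - f y) \<in> Xbar \<longleftrightarrow> f \<in> Xbar"
  unfolding Xbar_def bounded_real by auto

lemma dual1:
  "visc_super \<Omega> g X A u \<longleftrightarrow>
   visc_sub \<Omega> (\<lambda>y. - g y) ((\<lambda>f y. - f y) ` X) (\<lambda>x \<psi> s. - A x (\<lambda>y. - \<psi> y) (- s)) (\<lambda>y. - u y)"
  unfolding visc_super_def visc_sub_def Xbar_neg by (simp del: Compl_iff)

lemma dual2:
  "visc_sub \<Omega> g X A u \<longleftrightarrow>
   visc_super \<Omega> (\<lambda>y. - g y) ((\<lambda>f y. - f y) ` X) (\<lambda>x \<psi> s. - A x (\<lambda>y. - \<psi> y) (- s)) (\<lambda>y. - u y)"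
  unfolding visc_super_def visc_sub_def Xbar_neg by (simp del: Compl_iff)

theorem mainTheorem1:
  fixes \<Omega> :: "'a::euclidean_space set"
    and g :: "'a \<Rightarrow> real"
    and X :: "('a \<Rightarrow> real) set"
    and A :: "'a \<Rightarrow> ('a \<Rightarrow> real) \<Rightarrow> real \<Rightarrow> real"
  assumes dom: "open \<Omega>" "connected \<Omega>"
    and g_bdd: "bounded (g ` (- \<Omega>))"
    and X_sub: "X \<subseteq> Xbar"
    and A_a: "\<And>x \<phi>1 \<phi>2 s. x \<in> \<Omega> \<Longrightarrow> \<phi>1 \<in> X \<Longrightarrow> \<phi>2 \<in> X \<Longrightarrow>
                 (\<forall>y. \<phi>1 y \<le> \<phi>2 y) \<Longrightarrow> A x \<phi>2 s \<le> A x \<phi>1 s"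
    and A_b: "\<And>x \<phi> s1 s2. x \<in> \<Omega> \<Longrightarrow> \<phi> \<in> X \<Longrightarrow> s1 \<le> s2 \<Longrightarrow>
                 A x \<phi> s1 \<le> A x \<phi> s2"
    and A_c: "\<And>x \<phi>. x \<in> \<Omega> \<Longrightarrow> \<phi> \<in> X \<Longrightarrow> \<exists>!s. A x \<phi> s = 0"
    and H: "((\<exists>v. visc_sub \<Omega> g X A v) \<and>
              (\<exists>M::real. \<forall>v. visc_sub \<Omega> g X A v \<longrightarrow> (\<forall>y. v y \<le> M)))
          \<or> ((\<exists>v. visc_super \<Omega> g X A v) \<and>
              (\<exists>M::real. \<forall>v. visc_super \<Omega> g X A v \<longrightarrow> (\<forall>y. M \<le> v y)))"
  shows "\<exists>u. visc_sol \<Omega> g X A u"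
  using H
proof
  assume "(\<exists>v. visc_sub \<Omega> g X A v) \<and>
              (\<exists>M::real. \<forall>v. visc_sub \<Omega> g X A v \<longrightarrow> (\<forall>y. v y \<le> M))"
  then obtain v0 M where ex: "visc_sub \<Omega> g X A v0" and Mb: "\<And>v y. visc_sub \<Omega> g X A v \<Longrightarrow> v y \<le> M"
    by blast
  show ?thesis by (rule perron_sub[where \<Omega>=\<Omega> and g=g and X=X and A=A]; (assumption | rule g_bdd A_a A_b A_c ex Mb)+)
next
  assume "(\<exists>v. visc_super \<Omega> g X A v) \<and>
              (\<exists>M::real. \<forall>v. visc_super \<Omega> g X A v \<longrightarrow> (\<forall>y. M \<le> v y))"
  then obtain v0 M where v0: "visc_super \<Omega> g X A v0"
    and M: "\<And>v y. visc_super \<Omega> g X A v \<Longrightarrow> M \<le> v y"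
    by blast
  define g' where "g' = (\<lambda>y. - g y)"
  define X' where "X' = (\<lambda>f y. - f y) ` X"
  define A' where "A' = (\<lambda>x \<psi> s. - A x (\<lambda>y. - \<psi> y) (- s))"
  have nn: "(\<lambda>y. - (- f y)) = f" for f :: "'a \<Rightarrow> real" by simp
  have g'b: "bounded (g' ` (- \<Omega>))"
  proof -
    obtain B where "\<forall>y\<in>g ` (- \<Omega>). \<bar>y\<bar> \<le> B" using g_bdd unfolding bounded_real by blast
    then show ?thesis unfolding bounded_real g'_def by auto
  qed
  have A'a: "A' x \<phi>2 s \<le> A' x \<phi>1 s"
    if "x \<in> \<Omega>" "\<phi>1 \<in> X'" "\<phi>2 \<in> X'" "\<forall>y. \<phi>1 y \<le> \<phi>2 y" for x \<phi>1 \<phi>2 s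
  proof -
    have "A x (\<lambda>y. - \<phi>1 y) (- s) \<le> A x (\<lambda>y. - \<phi>2 y) (- s)"
      using that(4) by (intro A_a that(1)) (use that(2,3) in \<open>auto simp: X'_def\<close>)
    then show ?thesis unfolding A'_def by simp
  qed
  have A'b: "A' x \<phi> s1 \<le> A' x \<phi> s2"
    if "x \<in> \<Omega>" "\<phi> \<in> X'" "s1 \<le> s2" for x \<phi> s1 s2
  proof -
    have "A x (\<lambda>y. - \<phi> y) (- s2) \<le> A x (\<lambda>y. - \<phi> y) (- s1)"
      using that(3) by (intro A_b that(1)) (use that(2) in \<open>auto simp: X'_def\<close>)
    then show ?thesis unfolding A'_def by simp
  qed
  have A'c: "\<exists>!s. A' x \<phi> s = 0" if xO: "x \<in> \<Omega>" and pX: "\<phi> \<in> X'" for x \<phi>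
  proof -
    have nX: "(\<lambda>y. - \<phi> y) \<in> X" using that by (auto simp: X'_def)
    obtain s0 where s0: "A x (\<lambda>y. - \<phi> y) s0 = 0"
      and u: "\<And>t. A x (\<lambda>y. - \<phi> y) t = 0 \<Longrightarrow> t = s0"
      using A_c[OF xO nX] by metis
    show ?thesis
    proof (rule ex1I[of _ "- s0"])
      show "A' x \<phi> (- s0) = 0" using s0 unfolding A'_def by simp
    next
      fix t assume "A' x \<phi> t = 0"
      then have "A x (\<lambda>y. - \<phi> y) (- t) = 0" unfolding A'_def by simp
      then show "t = - s0" using u by force
    qed
  qed
  have ex': "visc_sub \<Omega> g' X' A' (\<lambda>y. - v0 y)"
    unfolding g'_def X'_def A'_def by (rule dual1[THEN iffD1, OF v0])
  have M': "v y \<le> - M" if "visc_sub \<Omega> g' X' A' v" for v y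
  proof -
    have "visc_sub \<Omega> g' X' A' (\<lambda>y. - (- v y))" using that by simp
    then have "visc_super \<Omega> g X A (\<lambda>y. - v y)"
      using dual1[of \<Omega> g X A "\<lambda>y. - v y", THEN iffD2] unfolding g'_def X'_def A'_def by simp
    from M[OF this, of y] show ?thesis by simp
  qed
  obtain u where u: "visc_sol \<Omega> g' X' A' u"
  proof -
    have "\<exists>u. visc_sol \<Omega> g' X' A' u"
      by (rule perron_sub[where \<Omega>=\<Omega> and g=g' and X=X' and A=A']; (assumption | rule g'b A'a A'b A'c ex' M')+)
    then show ?thesis using that by blast
  qed
  have s1: "visc_sub \<Omega> g' X' A' (\<lambda>y. - (- u y))" and s2: "visc_super \<Omega> g' X' A' (\<lambda>y. - (- u y))"
    using u unfolding visc_sol_def by simp_all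
  have "visc_super \<Omega> g X A (\<lambda>y. - u y)"
    using dual1[of \<Omega> g X A "\<lambda>y. - u y", THEN iffD2] s1 unfolding g'_def X'_def A'_def by simp
  moreover have "visc_sub \<Omega> g X A (\<lambda>y. - u y)"
    using dual2[of \<Omega> g X A "\<lambda>y. - u y", THEN iffD2] s2 unfolding g'_def X'_def A'_def by simp
  ultimately show ?thesis unfolding visc_sol_def by blast
qed

end
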